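(* Let $\lambda=0.098$, $f_1=5-\log5$, and define $V(f)=\frac{\pi}{2^{1/2}}+\lambda(f-1)^{3/2}$ and $W(f)=V(f)^2-\log(4V(f)^2)-f$ for $f\ge1$. Then $0<\lambda<\dfrac{2J(f_1)}{3(f_1-1)}$, $W(f_1)>0$, and $W'(f_1)<0$.
   Context: For $f>1$ let $h^*(f)>1$ and $h_*(f)\in(0,1)$ be the two solutions $h$ of $h-\log h=f$, and set $J(f)=\frac1{h^*(f)-1}+\frac1{1-h_*(f)}-\big(\frac2{f-1}\big)^{1/2}$. *)

theory Defs
  imports "HOL-Analysis.Analysis"
begin

definition h_upper :: "real \<Rightarrow> real" where
  "h_upper f = (THE h. h > 1 \<and> h - ln h = f)"

definition h_lower :: "real \<Rightarrow> real" where
  "h_lower f = (THE h. 0 < h \<and> h < 1 \<and> h - ln h = f)"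

definition J :: "real \<Rightarrow> real" where
  "J f = 1 / (h_upper f - 1) + 1 / (1 - h_lower f) - sqrt (2 / (f - 1))"

definition lam :: real where "lam = 0.098"

definition f1 :: real where "f1 = 5 - ln 5"

definition V :: "real \<Rightarrow> real" where
  "V f = pi / sqrt 2 + lam * (f - 1) powr (3/2)"

definition W :: "real \<Rightarrow> real" where
  "W f = (V f)\<^sup>2 - ln (4 * (V f)\<^sup>2) - f"

end

theory Submission
  imports Defs
begin

lemma exp_lb: fixes x::real assumes "0 \<le> x" shows "(\<Sum>m<n. x^m / fact m) \<le> exp x"
proof -
  obtain t where t: "\<bar>t\<bar> \<le> \<bar>x\<bar>" "exp x = (\<Sum>m<n. (x ^ m) / fact m) + (exp t / fact n) * x ^ n"
    using Maclaurin_exp_le by blast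
  have "0 \<le> (exp t / fact n) * x ^ n" using assms by simp
  then show ?thesis using t by linarith
qed

lemma exp_ub: fixes x::real assumes "0 \<le> x" "x^n < fact n"
  shows "exp x \<le> (\<Sum>m<n. x^m / fact m) / (1 - x^n / fact n)"
proof -
  obtain t where t: "\<bar>t\<bar> \<le> \<bar>x\<bar>" "exp x = (\<Sum>m<n. (x ^ m) / fact m) + (exp t / fact n) * x ^ n"
    using Maclaurin_exp_le by blast
  have "exp t \<le> exp x" using t(1) assms by simp
  hence "(exp t / fact n) * x ^ n \<le> (exp x / fact n) * x ^ n" using assms
    by (intro mult_right_mono divide_right_mono) auto
  hence "exp x - exp x * (x^n / fact n) \<le> (\<Sum>m<n. x^m / fact m)" using t by simp
  hence "exp x * (1 - x^n / fact n) \<le> (\<Sum>m<n. x^m / fact m)" by (simp add: algebra_simps)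
  moreover have "0 < 1 - x^n / fact n" using assms by simp
  ultimately show ?thesis by (simp add: field_simps)
qed

lemma ln5_ub: "ln (5::real) \<le> 1.609438"
proof -
  have "(5::real) \<le> (\<Sum>m<13. (1.609438::real)^m / fact m)"
    by (simp add: eval_nat_numeral fact_Suc)
  also have "\<dots> \<le> exp 1.609438" by (rule exp_lb) simp
  finally have "ln (5::real) \<le> ln (exp 1.609438)" by (intro ln_mono) auto
  thus ?thesis by simp
qed

lemma ln5_lb: "1.6094 \<le> ln (5::real)"
proof -
  have "exp (1.6094::real) \<le> (\<Sum>m<12. (1.6094::real)^m / fact m) / (1 - 1.6094^12 / fact 12)"
    by (rule exp_ub) (simp_all add: eval_nat_numeral fact_Suc)
  also have "\<dots> \<le> 5" by (simp add: eval_nat_numeral fact_Suc)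
  finally have "ln (exp (1.6094::real)) \<le> ln 5" by (intro ln_mono) auto
  thus ?thesis by simp
qed

lemma key_exp: "4 * (2.583664::real)^2 / 5 \<le> exp 1.6753"
proof -
  have "4 * (2.583664::real)^2 / 5 \<le> (\<Sum>m<12. (1.6753::real)^m / fact m)"
    by (simp add: eval_nat_numeral fact_Suc)
  also have "\<dots> \<le> exp 1.6753" by (rule exp_lb) simp
  finally show ?thesis .
qed

lemma sqrt2_bounds: "1.4142135 \<le> sqrt (2::real)" "sqrt (2::real) \<le> 1.41421357"
  by (rule real_le_rsqrt; simp add: power2_eq_square) (rule real_le_lsqrt; simp add: power2_eq_square)

lemma q_bounds: "2.390562 \<le> f1 - 1" "f1 - 1 \<le> 2.3906"
  using ln5_ub ln5_lb unfolding f1_def by simp_all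

lemma sq_bounds: "1.546144 \<le> sqrt (f1 - 1)" "sqrt (f1 - 1) \<le> 1.54616"
proof -
  show "1.546144 \<le> sqrt (f1 - 1)" by (rule real_le_rsqrt) (use q_bounds in \<open>simp add: power2_eq_square\<close>)
  show "sqrt (f1 - 1) \<le> 1.54616" by (rule real_le_lsqrt) (use q_bounds in \<open>simp_all add: power2_eq_square\<close>)
qed

lemma powr_32: "(f1 - 1) powr (3/2) = (f1 - 1) * sqrt (f1 - 1)"
proof -
  have q: "0 < f1 - 1" using q_bounds by simp
  have "(f1 - 1) powr (3/2) = (f1 - 1) powr (1 + 1/2)" by simp
  also have "\<dots> = (f1 - 1) * (f1 - 1) powr (1/2)" using q powr_add[of "f1 - 1" 1 "1/2"] by simp
  also have "\<dots> = (f1 - 1) * sqrt (f1 - 1)" using q by (simp add: powr_half_sqrt)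
  finally show ?thesis .
qed

lemma V_bounds: "2.583664 \<le> V f1" "V f1 \<le> 2.58368"
proof -
  have V: "V f1 = pi / sqrt 2 + 0.098 * ((f1 - 1) * sqrt (f1 - 1))"
    unfolding V_def lam_def powr_32 by simp
  have p1: "3.141592653588 / 1.41421357 \<le> pi / sqrt (2::real)"
    using pi_approx sqrt2_bounds by (intro frac_le) auto
  have p2: "pi / sqrt (2::real) \<le> 3.1415926535899 / 1.4142135"
    using pi_approx sqrt2_bounds by (intro frac_le) auto
  have m1: "2.390562 * 1.546144 \<le> (f1 - 1) * sqrt (f1 - 1)"
    using q_bounds sq_bounds by (intro mult_mono) auto
  have m2: "(f1 - 1) * sqrt (f1 - 1) \<le> 2.3906 * 1.54616"
    using q_bounds sq_bounds by (intro mult_mono) auto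
  show "2.583664 \<le> V f1" unfolding V using p1 m1 by simp
  show "V f1 \<le> 2.58368" unfolding V using p2 m2 by simp
qed

lemma W_pos: "W f1 > 0"
proof -
  define v where "v = V f1"
  define l where "l = (2.583664::real)"
  have vl: "l \<le> v" "1 \<le> l" using V_bounds unfolding v_def l_def by auto
  have "ln (v^2 / l^2) \<le> v^2 / l^2 - 1" using vl by (intro ln_le_minus_one) auto
  also have "\<dots> = (v^2 - l^2) / l^2" using vl by (simp add: field_simps)
  also have "\<dots> \<le> v^2 - l^2"
  proof -
    have "0 \<le> v^2 - l^2" using vl by (simp add: power_mono)
    moreover have "1 \<le> l^2" using vl by simp
    ultimately have "(v^2 - l^2) / l^2 \<le> (v^2 - l^2) / 1" by (intro divide_left_mono) auto
    thus ?thesis by simp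
  qed
  finally have a: "ln (v^2 / l^2) \<le> v^2 - l^2" .
  have b: "ln (4 * v^2) = ln (v^2 / l^2) + ln (4 * l^2)" using vl
    by (simp add: ln_mult ln_div)
  have c: "ln (4 * l^2) = ln (4 * l^2 / 5) + ln 5" using vl by (simp add: ln_div)
  have d: "ln (4 * l^2 / 5) \<le> 1.6753" using key_exp unfolding l_def
    by (metis ln_exp ln_mono exp_gt_zero zero_less_divide_iff zero_less_numeral mult_pos_pos zero_less_power)
  have "W f1 = v^2 - ln (4 * v^2) - (5 - ln 5)" unfolding W_def v_def f1_def by simp
  also have "\<dots> \<ge> l^2 - 1.6753 - 5" using a b c d by linarith
  finally have "l^2 - 1.6753 - 5 \<le> W f1" .
  moreover have "0 < l^2 - 1.6753 - 5" unfolding l_def by (simp add: power2_eq_square)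
  ultimately show ?thesis by linarith
qed

lemma W_deriv: "\<exists>D. (W has_real_derivative D) (at f1) \<and> D < 0"
proof -
  have q: "0 < f1 - 1" using q_bounds by simp
  define v' where "v' = lam * (3/2 * (f1 - 1) powr (3/2 - 1))"
  have dV: "(V has_real_derivative v') (at f1)"
    unfolding V_def[abs_def] v'_def using q
    by (auto intro!: derivative_eq_intros)
  have v'eq: "v' = 0.147 * sqrt (f1 - 1)"
    unfolding v'_def lam_def using q_bounds by (simp add: powr_half_sqrt[symmetric])
  define v where "v = V f1"
  have vb: "2.583664 \<le> v" "v \<le> 2.58368" using V_bounds unfolding v_def by auto
  have dW: "(W has_real_derivative (2 * v * v' - (4 * (2 * v * v')) / (4 * v^2) - 1)) (at f1)"
    unfolding W_def[abs_def] v_def using vb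
    by (auto intro!: derivative_eq_intros dV simp: v_def)
  have eq: "2 * v * v' - (4 * (2 * v * v')) / (4 * v^2) - 1 = (2 * v - 2 / v) * v' - 1"
    using vb by (simp add: field_simps power2_eq_square)
  have h1: "2 * v - 2 / v \<le> 2 * 2.58368 - 2 / 2.58368"
  proof -
    have "2 / 2.58368 \<le> 2 / v" using vb by (intro divide_left_mono) auto
    thus ?thesis using vb by linarith
  qed
  have "1 \<le> v * v" using mult_mono[of 1 v 1 v] vb by simp
  hence h2: "0 \<le> 2 * v - 2 / v" using vb by (simp add: field_simps)
  have h3: "v' \<le> 0.147 * 1.54616" unfolding v'eq using sq_bounds by simp
  have h4: "0 \<le> v'" unfolding v'eq using q by simp
  have "(2 * v - 2 / v) * v' \<le> (2 * 2.58368 - 2 / 2.58368) * (0.147 * 1.54616)"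
    using h1 h2 h3 h4 by (intro mult_mono) auto
  hence "(2 * v - 2 / v) * v' - 1 < 0" by simp
  thus ?thesis using dW eq by metis
qed

lemma hfun_dec: "0 < a \<Longrightarrow> a < b \<Longrightarrow> b < 1 \<Longrightarrow> a - ln a \<noteq> b - ln (b::real)"
proof
  assume ab: "0 < a" "a < b" "b < 1" and e: "a - ln a = b - ln b"
  have "ln (a / b) \<le> a / b - 1" using ab by (intro ln_le_minus_one) auto
  hence "ln a - ln b \<le> (a - b) / b" using ab by (simp add: ln_div field_simps)
  moreover have "(a - b) / b < a - b"
  proof -
    have "0 < (b - a) * (1 - b)" using ab by simp
    hence "(a - b) < (a - b) * b" by (simp add: algebra_simps)
    thus ?thesis using ab by (simp add: divide_less_eq)
  qed
  ultimately show False using e by linarith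
qed

lemma hfun_inc: "1 < a \<Longrightarrow> a < b \<Longrightarrow> a - ln a \<noteq> b - ln (b::real)"
proof
  assume ab: "1 < a" "a < b" and e: "a - ln a = b - ln b"
  have "ln (b / a) \<le> b / a - 1" using ab by (intro ln_le_minus_one) auto
  hence "ln b - ln a \<le> (b - a) / a" using ab by (simp add: ln_div field_simps)
  moreover have "(b - a) / a < b - a"
  proof -
    have "0 < (b - a) * (a - 1)" using ab by simp
    hence "(b - a) < (b - a) * a" by (simp add: algebra_simps)
    thus ?thesis using ab by (simp add: divide_less_eq)
  qed
  ultimately show False using e by linarith
qed

lemma h_upper_f1: "h_upper f1 = 5"
  unfolding h_upper_def
proof (rule the_equality)
  show "5 > (1::real) \<and> 5 - ln 5 = f1" unfolding f1_def by simp
  fix h assume h: "h > 1 \<and> h - ln h = f1"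
  show "h = 5"
  proof (rule ccontr)
    assume "h \<noteq> 5"
    hence "h < 5 \<or> 5 < h" by linarith
    thus False using h hfun_inc[of h 5] hfun_inc[of 5 h] unfolding f1_def by auto
  qed
qed

lemma h_lower_f1: "0.025 \<le> h_lower f1" "h_lower f1 < 1"
proof -
  have l2: "2/3 \<le> ln (2::real)" "ln (2::real) \<le> 25/36"
    using ln2_ge_two_thirds ln2_le_25_over_36 by auto
  have ln40: "ln (40::real) = 3 * ln 2 + ln 5"
  proof -
    have "ln (40::real) = ln (2*2*2*5)" by simp
    also have "\<dots> = ln 2 + ln 2 + ln 2 + ln 5" by (simp only: ln_mult) simp_all
    finally show ?thesis by simp
  qed
  have ln20: "ln (20::real) = 2 * ln 2 + ln 5"
  proof -
    have "ln (20::real) = ln (2*2*5)" by simp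
    also have "\<dots> = ln 2 + ln 2 + ln 5" by (simp only: ln_mult) simp_all
    finally show ?thesis by simp
  qed
  have fa: "f1 \<le> 0.025 - ln (0.025::real)"
  proof -
    have e: "(0.025::real) = inverse 40" by simp
    have "ln (0.025::real) = - ln 40" unfolding e by (simp add: ln_div)
    hence "0.025 - ln (0.025::real) = 0.025 + 3 * ln 2 + ln 5" using ln40 by simp
    moreover have "5 - ln 5 \<le> 0.025 + 3 * ln 2 + ln (5::real)" using l2 ln5_lb by simp
    ultimately show ?thesis unfolding f1_def by simp
  qed
  have fb: "0.05 - ln (0.05::real) \<le> f1"
  proof -
    have e: "(0.05::real) = inverse 20" by simp
    have "ln (0.05::real) = - ln 20" unfolding e by (simp add: ln_div)
    hence "0.05 - ln (0.05::real) = 0.05 + 2 * ln 2 + ln 5" using ln20 by simp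
    moreover have "0.05 + 2 * ln 2 + ln (5::real) \<le> 5 - ln 5" using l2 ln5_ub by simp
    ultimately show ?thesis unfolding f1_def by simp
  qed
  have cont: "continuous_on {0.025..0.05::real} (\<lambda>x. x - ln x)"
    by (intro continuous_intros) auto
  obtain h where h: "0.025 \<le> h" "h \<le> 0.05" "h - ln h = f1"
    using IVT2'[of "\<lambda>x. x - ln x" "0.05" f1 "0.025", OF fb fa _ cont] by auto
  have "h_lower f1 = h" unfolding h_lower_def
  proof (rule the_equality)
    show "0 < h \<and> h < 1 \<and> h - ln h = f1" using h by simp
    fix g assume g: "0 < g \<and> g < 1 \<and> g - ln g = f1"
    show "g = h"
    proof (rule ccontr)
      assume "g \<noteq> h"
      hence "g < h \<or> h < g" by linarith
      thus False using g h hfun_dec[of g h] hfun_dec[of h g] by auto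
    qed
  qed
  thus "0.025 \<le> h_lower f1" "h_lower f1 < 1" using h by auto
qed

lemma lam_J: "lam < 2 * J f1 / (3 * (f1 - 1))"
proof -
  have q: "2.390562 \<le> f1 - 1" "f1 - 1 \<le> 2.3906" using q_bounds by auto
  have s: "sqrt (2 / (f1 - 1)) \<le> 0.9147"
  proof (rule real_le_lsqrt)
    show "2 / (f1 - 1) \<le> 0.9147\<^sup>2" using q by (simp add: divide_le_eq power2_eq_square)
  qed simp
  have hl: "1 / (1 - 0.025) \<le> 1 / (1 - h_lower f1)"
    using h_lower_f1 by (intro divide_left_mono) auto
  have J: "J f1 \<ge> 1/4 + 1 / (1 - 0.025) - 0.9147"
    unfolding J_def h_upper_f1 using s hl by simp
  have "lam * (3 * (f1 - 1)) < 2 * J f1" using J q unfolding lam_def by simp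
  thus ?thesis using q by (simp add: pos_less_divide_eq)
qed

theorem lemma2p8:
  shows "0 < lam \<and> lam < 2 * J f1 / (3 * (f1 - 1)) \<and> W f1 > 0 \<and>
         (\<exists>D. (W has_real_derivative D) (at f1) \<and> D < 0)"
  using lam_J W_pos W_deriv unfolding lam_def by simp

end
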